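(* Let $G$ be a finite graph and $\ell$ a $\mathbb{Z}_2^2$-cordial labeling of $G$. Then for every bijection $\varphi:\mathbb{Z}_2^2\to\mathbb{Z}_2^2$ with $\varphi(0)=0$, the labeling $\varphi\circ\ell$ is also a $\mathbb{Z}_2^2$-cordial labeling of $G$.
   Context: $\mathbb{Z}_2^2=\mathbb{Z}_2\times\mathbb{Z}_2$ is the Klein four-group. For an abelian group $A$ and a graph $G=(V,E)$, a vertex labeling $\ell:V\to A$ induces an edge labeling $\ell(\{v_1,v_2\})=\ell(v_1)+\ell(v_2)$. Let $f_V(a)=|\{v\in V:\ell(v)=a\}|$ and $f_E(a)=|\{e\in E:\ell(e)=a\}|$. The labeling is $A$-cordial if $|f_V(a_1)-f_V(a_2)|\le 1$ and $|f_E(a_1)-f_E(a_2)|\le 1$ for all $a_1,a_2\in A$. *)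

theory Defs
  imports Main
begin

text \<open>The Klein four-group Z_2 x Z_2, represented as bool x bool with
  componentwise exclusive-or as the group operation and (False, False) as 0.\<close>

type_synonym k4 = "bool \<times> bool"

definition k4_zero :: k4 where
  "k4_zero = (False, False)"

definition k4_add :: "k4 \<Rightarrow> k4 \<Rightarrow> k4" where
  "k4_add x y = (fst x \<noteq> fst y, snd x \<noteq> snd y)"

definition finite_graph :: "'v set \<Rightarrow> 'v set set \<Rightarrow> bool" where
  "finite_graph V E \<longleftrightarrow> finite V \<and>
     (\<forall>e\<in>E. \<exists>u v. u \<in> V \<and> v \<in> V \<and> u \<noteq> v \<and> e = {u, v})"

definition vcount :: "'v set \<Rightarrow> ('v \<Rightarrow> k4) \<Rightarrow> k4 \<Rightarrow> nat" where
  "vcount V l a = card {v \<in> V. l v = a}"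

definition ecount :: "'v set set \<Rightarrow> ('v \<Rightarrow> k4) \<Rightarrow> k4 \<Rightarrow> nat" where
  "ecount E l a = card {e \<in> E. \<exists>u v. e = {u, v} \<and> k4_add (l u) (l v) = a}"

definition k4_cordial :: "'v set \<Rightarrow> 'v set set \<Rightarrow> ('v \<Rightarrow> k4) \<Rightarrow> bool" where
  "k4_cordial V E l \<longleftrightarrow>
     (\<forall>a1 a2. \<bar>int (vcount V l a1) - int (vcount V l a2)\<bar> \<le> 1) \<and>
     (\<forall>a1 a2. \<bar>int (ecount E l a1) - int (ecount E l a2)\<bar> \<le> 1)"

end

theory Submission
  imports Defs
begin

lemma k4_hom:
  assumes "inj \<phi>" "\<phi> k4_zero = k4_zero"
  shows "\<phi> (k4_add x y) = k4_add (\<phi> x) (\<phi> y)"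
proof -
  have d: "\<phi> a \<noteq> \<phi> b" if "a \<noteq> b" for a b using assms(1) that by (meson injD)
  have z: "\<phi> (False,False) = (False,False)" using assms(2) by (simp add: k4_zero_def)
  note d1 = d[of "(False,False)" "(True,False)"] d[of "(False,False)" "(False,True)"]
    d[of "(False,False)" "(True,True)"] d[of "(True,False)" "(False,True)"]
    d[of "(True,False)" "(True,True)"] d[of "(False,True)" "(True,True)"]
  obtain x1 x2 y1 y2 where xy: "x = (x1,x2)" "y = (y1,y2)" by (cases x, cases y) auto
  obtain a1 a2 where a: "\<phi> (True,False) = (a1,a2)" by (cases "\<phi> (True,False)") auto
  obtain b1 b2 where b: "\<phi> (False,True) = (b1,b2)" by (cases "\<phi> (False,True)") auto
  obtain c1 c2 where c: "\<phi> (True,True) = (c1,c2)" by (cases "\<phi> (True,True)") auto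
  show ?thesis using d1 z a b c unfolding xy k4_add_def
    by (cases x1; cases x2; cases y1; cases y2; cases a1; cases a2; cases b1; cases b2; cases c1; cases c2) simp_all
qed

lemma vcount_comp:
  assumes "bij \<phi>"
  shows "vcount V (\<phi> \<circ> l) a = vcount V l (inv \<phi> a)"
proof -
  have "\<phi> (l v) = a \<longleftrightarrow> l v = inv \<phi> a" for v
    using assms by (metis bij_inv_eq_iff)
  then show ?thesis unfolding vcount_def by simp
qed

lemma ecount_comp:
  assumes "bij \<phi>" "\<phi> k4_zero = k4_zero"
  shows "ecount E (\<phi> \<circ> l) a = ecount E l (inv \<phi> a)"
proof -
  have "k4_add (\<phi> (l u)) (\<phi> (l v)) = a \<longleftrightarrow> k4_add (l u) (l v) = inv \<phi> a" for u v
    using assms k4_hom[of \<phi>] by (metis bij_inv_eq_iff bij_is_inj)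
  then show ?thesis unfolding ecount_def by simp
qed

theorem lemma4p2:
  fixes V :: "'v set" and E :: "'v set set" and l :: "'v \<Rightarrow> k4" and \<phi> :: "k4 \<Rightarrow> k4"
  assumes "finite_graph V E"
    and "k4_cordial V E l"
    and "bij \<phi>"
    and "\<phi> k4_zero = k4_zero"
  shows "k4_cordial V E (\<phi> \<circ> l)"
proof -
  have h: "(\<forall>a1 a2. \<bar>int (vcount V l a1) - int (vcount V l a2)\<bar> \<le> 1) \<and>
     (\<forall>a1 a2. \<bar>int (ecount E l a1) - int (ecount E l a2)\<bar> \<le> 1)"
    using assms(2) unfolding k4_cordial_def .
  show ?thesis unfolding k4_cordial_def vcount_comp[OF assms(3)] ecount_comp[OF assms(3,4)]
    using h by blast
qed

end
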